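(* For each $n\ge 2$, there are exactly $2^{\aleph_0}$ pairwise non-isomorphic diameter-$4$ perfect Lee codes in $Z^n$.
   Context: Lee distance on $Z^n$: $\rho_L(v,w)=\sum_i|v_i-w_i|$; $S_{n,1}(v)=\{w:\rho_L(v,w)\le1\}$; for $\rho_L(v,w)=1$ the double-sphere is $DS_{n,1}(v,w)=S_{n,1}(v)\cup S_{n,1}(w)$. A copy of a set is its image under a linear distance-preserving bijection of $Z^n$; a tiling is a family of pairwise disjoint copies covering $Z^n$. A diameter-$4$ perfect Lee code in $Z^n$ is a set $\mathcal{L}$ with pairwise Lee distances $\ge 4$ such that there is a tiling of $Z^n$ by copies of $DS_{n,1}$ (the maximum-size anticode of diameter $3$) in which each tile contains exactly one element of $\mathcal{L}$ and distinct tiles contain distinct elements. Two codes are isomorphic if some linear distance-preserving bijection $Z^n\to Z^n$ maps one onto the other. *)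

theory Defs
  imports Complex_Main
begin

text \<open>Points of Z^n are represented as functions nat => int vanishing at all
  coordinates >= n.\<close>

definition Zn :: "nat \<Rightarrow> (nat \<Rightarrow> int) set" where
  "Zn n = {v. \<forall>i\<ge>n. v i = 0}"

definition lee_dist :: "nat \<Rightarrow> (nat \<Rightarrow> int) \<Rightarrow> (nat \<Rightarrow> int) \<Rightarrow> int" where
  "lee_dist n v w = (\<Sum>i<n. \<bar>v i - w i\<bar>)"

definition lee_sphere1 :: "nat \<Rightarrow> (nat \<Rightarrow> int) \<Rightarrow> (nat \<Rightarrow> int) set" where
  "lee_sphere1 n v = {w \<in> Zn n. lee_dist n v w \<le> 1}"

definition double_sphere :: "nat \<Rightarrow> (nat \<Rightarrow> int) \<Rightarrow> (nat \<Rightarrow> int) \<Rightarrow> (nat \<Rightarrow> int) set" where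
  "double_sphere n v w = lee_sphere1 n v \<union> lee_sphere1 n w"

definition DS :: "nat \<Rightarrow> (nat \<Rightarrow> int) set" where
  "DS n = double_sphere n (\<lambda>_. 0) (\<lambda>i. if i = 0 then 1 else 0)"

definition lee_isometry :: "nat \<Rightarrow> ((nat \<Rightarrow> int) \<Rightarrow> (nat \<Rightarrow> int)) \<Rightarrow> bool" where
  "lee_isometry n f \<longleftrightarrow> bij_betw f (Zn n) (Zn n) \<and>
     (\<forall>v\<in>Zn n. \<forall>w\<in>Zn n. lee_dist n (f v) (f w) = lee_dist n v w)"

definition linear_lee_isometry :: "nat \<Rightarrow> ((nat \<Rightarrow> int) \<Rightarrow> (nat \<Rightarrow> int)) \<Rightarrow> bool" where
  "linear_lee_isometry n f \<longleftrightarrow> lee_isometry n f \<and>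
     (\<forall>v\<in>Zn n. \<forall>w\<in>Zn n. f (\<lambda>i. v i + w i) = (\<lambda>i. f v i + f w i)) \<and>
     (\<forall>k. \<forall>v\<in>Zn n. f (\<lambda>i. k * v i) = (\<lambda>i. k * f v i))"

text \<open>A copy of a set: its image under a distance-preserving bijection of Z^n
  (translations must be allowed, otherwise no tiling exists).\<close>
definition is_copy :: "nat \<Rightarrow> (nat \<Rightarrow> int) set \<Rightarrow> (nat \<Rightarrow> int) set \<Rightarrow> bool" where
  "is_copy n S T \<longleftrightarrow> (\<exists>f. lee_isometry n f \<and> T = f ` S)"

definition DS_tiling :: "nat \<Rightarrow> (nat \<Rightarrow> int) set set \<Rightarrow> bool" where
  "DS_tiling n \<T> \<longleftrightarrow> (\<forall>T\<in>\<T>. is_copy n (DS n) T) \<and>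
     (\<forall>T\<in>\<T>. \<forall>T'\<in>\<T>. T \<noteq> T' \<longrightarrow> T \<inter> T' = {}) \<and> \<Union>\<T> = Zn n"

definition perfect_lee_code_d4 :: "nat \<Rightarrow> (nat \<Rightarrow> int) set \<Rightarrow> bool" where
  "perfect_lee_code_d4 n L \<longleftrightarrow> L \<subseteq> Zn n \<and>
     (\<forall>c\<in>L. \<forall>c'\<in>L. c \<noteq> c' \<longrightarrow> lee_dist n c c' \<ge> 4) \<and>
     (\<exists>\<T>. DS_tiling n \<T> \<and>
        (\<forall>T\<in>\<T>. \<exists>!c. c \<in> L \<and> c \<in> T) \<and>
        (\<forall>T\<in>\<T>. \<forall>T'\<in>\<T>. \<forall>c\<in>L. T \<noteq> T' \<and> c \<in> T \<longrightarrow> c \<notin> T'))"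

definition codes_d4 :: "nat \<Rightarrow> (nat \<Rightarrow> int) set set" where
  "codes_d4 n = {L. perfect_lee_code_d4 n L}"

definition code_iso :: "nat \<Rightarrow> ((nat \<Rightarrow> int) set \<times> (nat \<Rightarrow> int) set) set" where
  "code_iso n = {(L, L'). L \<in> codes_d4 n \<and> L' \<in> codes_d4 n \<and>
     (\<exists>f. linear_lee_isometry n f \<and> f ` L = L')}"

end

theory Submission
  imports Defs "HOL-Library.Equipollence" "HOL-Analysis.Analysis"
begin


definition vadd :: "(nat \<Rightarrow> int) \<Rightarrow> (nat \<Rightarrow> int) \<Rightarrow> (nat \<Rightarrow> int)" where
  "vadd u v = (\<lambda>i. u i + v i)"
definition vsub :: "(nat \<Rightarrow> int) \<Rightarrow> (nat \<Rightarrow> int) \<Rightarrow> (nat \<Rightarrow> int)" where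
  "vsub u v = (\<lambda>i. u i - v i)"
definition e0 :: "nat \<Rightarrow> int" where "e0 = (\<lambda>i. if i = 0 then 1 else 0)"
definition z0 :: "nat \<Rightarrow> int" where "z0 = (\<lambda>_. 0)"

lemma Zn_vadd: "u \<in> Zn n \<Longrightarrow> v \<in> Zn n \<Longrightarrow> vadd u v \<in> Zn n"
  by (auto simp: Zn_def vadd_def)
lemma Zn_vsub: "u \<in> Zn n \<Longrightarrow> v \<in> Zn n \<Longrightarrow> vsub u v \<in> Zn n"
  by (auto simp: Zn_def vsub_def)

lemma lee_dist_triangle: "lee_dist n u w \<le> lee_dist n u v + lee_dist n v w"
  unfolding lee_dist_def sum.distrib[symmetric] by (rule sum_mono) auto

lemma lee_dist_sym: "lee_dist n u v = lee_dist n v u"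
  unfolding lee_dist_def by (rule sum.cong) auto

lemma lee_dist_nonneg: "lee_dist n u v \<ge> 0"
  unfolding lee_dist_def by (rule sum_nonneg) auto

lemma lee_dist_vsub: "lee_dist n u v = lee_dist n z0 (vsub u v)"
  unfolding lee_dist_def z0_def vsub_def by (rule sum.cong) auto

lemma lee_dist_vadd: "lee_dist n (vadd u c) (vadd v c) = lee_dist n u v"
  unfolding lee_dist_def vadd_def by (rule sum.cong) auto

lemma DS_char: "u \<in> DS n \<longleftrightarrow> u \<in> Zn n \<and> (lee_dist n z0 u \<le> 1 \<or> lee_dist n e0 u \<le> 1)"
  unfolding DS_def double_sphere_def lee_sphere1_def z0_def e0_def by auto

lemma DS_sub: "DS n \<subseteq> Zn n" using DS_char by auto

lemma dist_z0_e0: "n \<ge> 1 \<Longrightarrow> lee_dist n z0 e0 = 1"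
proof -
  assume "n \<ge> 1"
  then have "{..<n} = insert 0 {1..<n}" by auto
  then show ?thesis unfolding lee_dist_def z0_def e0_def by simp
qed

lemma DS_diam: assumes "n \<ge> 1" "u \<in> DS n" "v \<in> DS n" shows "lee_dist n u v \<le> 3"
proof -
  have d: "lee_dist n z0 e0 = 1" "lee_dist n e0 z0 = 1" using dist_z0_e0 assms(1) lee_dist_sym by metis+
  have t: "\<And>a b c. lee_dist n a c \<le> lee_dist n a b + lee_dist n b c" by (rule lee_dist_triangle)
  have sv1: "lee_dist n z0 v \<le> 1 \<or> lee_dist n e0 v \<le> 1" using assms(3) DS_char by auto
  have su1: "lee_dist n u z0 \<le> 1 \<or> lee_dist n u e0 \<le> 1" using assms(2) DS_char lee_dist_sym by metis
  show ?thesis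
    using su1 sv1 t[where a=u and b=z0 and c=v] t[where a=u and b=e0 and c=v]
      t[where a=z0 and b=e0 and c=v] t[where a=e0 and b=z0 and c=v] d
    by linarith
qed


definition sm :: "nat \<Rightarrow> (nat \<Rightarrow> int) \<Rightarrow> int" where "sm n x = (\<Sum>i\<in>{1..<n}. x i)"
definition wt :: "nat \<Rightarrow> (nat \<Rightarrow> int) \<Rightarrow> int" where "wt n x = (\<Sum>i\<in>{1..<n}. int i * x i)"
definition psi :: "nat \<Rightarrow> (nat \<Rightarrow> int) \<Rightarrow> int" where "psi n x = x 0 - sm n x"
definition Lam :: "nat \<Rightarrow> (nat \<Rightarrow> int) set" where
  "Lam n = {a \<in> Zn n. int n dvd wt n a \<and> 4 dvd psi n a}"

lemma lessThan_split0: "(n::nat) \<ge> 1 \<Longrightarrow> {..<n} = insert 0 {1..<n}" by (auto simp: not_le)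

lemma sum_split0: "(n::nat) \<ge> 1 \<Longrightarrow> (\<Sum>i<n. f i) = f 0 + (\<Sum>i\<in>{1..<n}. f i)"
  using lessThan_split0[of n] by simp

lemma lee_dist_split: "n \<ge> 1 \<Longrightarrow> lee_dist n u v = \<bar>u 0 - v 0\<bar> + (\<Sum>i\<in>{1..<n}. \<bar>u i - v i\<bar>)"
  unfolding lee_dist_def by (rule sum_split0)

lemma psi_vsub: "psi n (vsub u v) = psi n u - psi n v"
  unfolding psi_def sm_def vsub_def by (simp add: sum_subtractf)
lemma wt_vsub: "wt n (vsub u v) = wt n u - wt n v"
  unfolding wt_def vsub_def by (simp add: sum_subtractf algebra_simps)
lemma psi_vadd: "psi n (vadd u v) = psi n u + psi n v"
  unfolding psi_def sm_def vadd_def by (simp add: sum.distrib)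
lemma wt_vadd: "wt n (vadd u v) = wt n u + wt n v"
  unfolding wt_def vadd_def by (simp add: sum.distrib algebra_simps)

lemma psi_bound: assumes "n \<ge> 1" shows "\<bar>psi n u - psi n v\<bar> \<le> lee_dist n u v"
proof -
  have "psi n u - psi n v = (u 0 - v 0) - (\<Sum>i\<in>{1..<n}. u i - v i)"
    unfolding psi_def sm_def by (simp add: sum_subtractf)
  moreover have "\<bar>\<Sum>i\<in>{1..<n}. u i - v i\<bar> \<le> (\<Sum>i\<in>{1..<n}. \<bar>u i - v i\<bar>)" by (rule sum_abs)
  ultimately show ?thesis using lee_dist_split[OF assms, of u v] by linarith
qed

lemma sum_abs_zero:
  assumes "finite S" "(\<Sum>j\<in>S. \<bar>f j :: int\<bar>) = 0" "j \<in> S" shows "f j = 0"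
  using assms sum_nonneg_eq_0_iff[of S "\<lambda>j. \<bar>f j\<bar>"] by auto

lemma Lam_dist:
  assumes n2: "n \<ge> 2" and a: "a \<in> Lam n" and b: "b \<in> Lam n" and ne: "a \<noteq> b"
  shows "lee_dist n a b \<ge> 4"
proof (rule ccontr)
  assume "\<not> lee_dist n a b \<ge> 4"
  then have lt: "lee_dist n a b \<le> 3" by simp
  define d where "d = vsub a b"
  have dZ: "d \<in> Zn n" using a b Zn_vsub unfolding d_def Lam_def by auto
  have wtd: "int n dvd wt n d" using a b unfolding d_def Lam_def wt_vsub by auto
  have psid: "4 dvd psi n d" using a b unfolding d_def Lam_def psi_vsub by auto
  define R where "R = (\<Sum>i\<in>{1..<n}. \<bar>d i\<bar>)"
  have LR: "lee_dist n a b = \<bar>d 0\<bar> + R" using lee_dist_split[of n a b] n2 unfolding R_def d_def vsub_def by simp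
  have smR: "\<bar>sm n d\<bar> \<le> R" unfolding sm_def R_def by (rule sum_abs)
  have R0: "R \<ge> 0" unfolding R_def by (rule sum_nonneg) auto
  have "\<bar>psi n d\<bar> \<le> 3" using LR lt smR unfolding psi_def by linarith
  with psid have "psi n d = 0" by (auto simp: dvd_def)
  then have d0: "d 0 = sm n d" unfolding psi_def by simp
  have ev: "even (R - sm n d)"
  proof -
    have "R - sm n d = (\<Sum>i\<in>{1..<n}. \<bar>d i\<bar> - d i)" unfolding R_def sm_def by (simp add: sum_subtractf)
    moreover have "even (\<Sum>i\<in>{1..<n}. \<bar>d i\<bar> - d i)"
      by (rule dvd_sum) (auto simp: abs_if)
    ultimately show ?thesis by simp
  qed
  have "\<exists>i\<in>{1..<n}. d i \<noteq> 0"
  proof (rule ccontr)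
    assume "\<not> ?thesis"
    then have z: "\<forall>i\<in>{1..<n}. d i = 0" by auto
    then have "sm n d = 0" unfolding sm_def by simp
    with d0 have "d 0 = 0" by simp
    have "\<forall>j. d j = 0"
    proof
      fix j show "d j = 0"
        using z dZ \<open>d 0 = 0\<close> unfolding Zn_def
        by (cases "j = 0"; cases "j < n") auto
    qed
    then have "a = b" unfolding d_def vsub_def by (auto simp: fun_eq_iff)
    with ne show False by simp
  qed
  then obtain i where i: "i \<in> {1..<n}" "d i \<noteq> 0" by blast
  define S where "S = {1..<n} - {i}"
  define R' where "R' = (\<Sum>j\<in>S. \<bar>d j\<bar>)"
  have RR: "R = \<bar>d i\<bar> + R'" unfolding R_def R'_def S_def using i by (simp add: sum.remove)
  have R'0: "R' \<ge> 0" unfolding R'_def by (rule sum_nonneg) auto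
  have smS: "sm n d = d i + (\<Sum>j\<in>S. d j)" unfolding sm_def S_def using i by (simp add: sum.remove)
  have wtS: "wt n d = int i * d i + (\<Sum>j\<in>S. int j * d j)" unfolding wt_def S_def using i by (simp add: sum.remove)
  have fS: "finite S" unfolding S_def by simp
  have di: "\<bar>d i\<bar> \<ge> 1" using i by simp
  consider "R = 1" | "R = 2" | "R = 3" using LR lt R0 RR R'0 di by linarith
  then show False
  proof cases
    case 1
    then have "R' = 0" "\<bar>d i\<bar> = 1" using RR R'0 di by linarith+
    then have z: "\<forall>j\<in>S. d j = 0" using sum_abs_zero[OF fS] unfolding R'_def by blast
    then have "wt n d = int i * d i" using wtS by simp
    with wtd have "int n dvd int i * d i" by simp
    moreover have "d i = 1 \<or> d i = -1" using \<open>\<bar>d i\<bar> = 1\<close> by auto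
    ultimately have "int n dvd int i" by auto
    then have "n dvd i" by simp
    with i show False by (auto dest: dvd_imp_le)
  next
    case 2
    have "even (2 - sm n d)" using ev 2 by simp
    then have "even (sm n d)" by presburger
    moreover have "\<bar>sm n d\<bar> \<le> 1" using 2 LR lt d0 by linarith
    ultimately have sm0: "sm n d = 0" by presburger
    have "\<bar>d i\<bar> = 1 \<or> \<bar>d i\<bar> = 2" using 2 RR R'0 di by linarith
    then show False
    proof
      assume "\<bar>d i\<bar> = 2"
      then have "R' = 0" using 2 RR by linarith
      then have z: "\<forall>j\<in>S. d j = 0" using sum_abs_zero[OF fS] unfolding R'_def by blast
      then have "sm n d = d i" using smS by simp
      with sm0 i show False by simp
    next
      assume di1: "\<bar>d i\<bar> = 1"
      then have R'1: "R' = 1" using 2 RR by linarith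
      have "\<exists>j\<in>S. d j \<noteq> 0"
      proof (rule ccontr)
        assume "\<not> ?thesis"
        then have "R' = 0" unfolding R'_def by simp
        with R'1 show False by simp
      qed
      then obtain j where j: "j \<in> S" "d j \<noteq> 0" by blast
      define S' where "S' = S - {j}"
      have fS': "finite S'" unfolding S'_def using fS by simp
      have "R' = \<bar>d j\<bar> + (\<Sum>k\<in>S'. \<bar>d k\<bar>)" unfolding R'_def S'_def using j fS by (simp add: sum.remove)
      moreover have "(\<Sum>k\<in>S'. \<bar>d k\<bar>) \<ge> 0" by (rule sum_nonneg) auto
      moreover have "\<bar>d j\<bar> \<ge> 1" using j by simp
      ultimately have dj1: "\<bar>d j\<bar> = 1" and z': "(\<Sum>k\<in>S'. \<bar>d k\<bar>) = 0" using R'1 by linarith+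
      have z: "\<forall>k\<in>S'. d k = 0" using sum_abs_zero[OF fS' z'] by blast
      have "(\<Sum>k\<in>S. d k) = d j + (\<Sum>k\<in>S'. d k)" unfolding S'_def using j fS by (simp add: sum.remove)
      then have "sm n d = d i + d j" using smS z by simp
      with sm0 have dji: "d j = - d i" by simp
      have "(\<Sum>k\<in>S. int k * d k) = int j * d j + (\<Sum>k\<in>S'. int k * d k)" unfolding S'_def using j fS by (simp add: sum.remove)
      then have "wt n d = int i * d i + int j * d j" using wtS z by simp
      then have "wt n d = d i * (int i - int j)" using dji by (simp add: algebra_simps)
      with wtd have "int n dvd d i * (int i - int j)" by simp
      moreover have "d i = 1 \<or> d i = -1" using di1 by auto
      ultimately have dv: "int n dvd (int i - int j)"
        by (metis dvd_minus_iff minus_diff_eq mult_1 mult_minus_left)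
      have ij: "j \<in> {1..<n}" "j \<noteq> i" using j unfolding S_def by auto
      have "int i - int j \<noteq> 0" using ij by simp
      from dvd_imp_le_int[OF this dv] have "int n \<le> \<bar>int i - int j\<bar>" by simp
      with i ij show False by auto
    qed
  next
    case 3
    then have "d 0 = 0" using LR lt by simp
    then have "sm n d = 0" using d0 by simp
    with ev 3 show False by simp
  qed
qed



definition mk :: "(nat \<Rightarrow> int) \<Rightarrow> int \<Rightarrow> nat \<Rightarrow> int \<Rightarrow> (nat \<Rightarrow> int)" where
  "mk x h i c = (\<lambda>j. if j = 0 then h else x j + (if j = i then c else 0))"

definition pt :: "int \<Rightarrow> nat \<Rightarrow> int \<Rightarrow> (nat \<Rightarrow> int)" where
  "pt p i q = (\<lambda>j. if j = 0 then p else if j = i then q else 0)"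

lemma sm_mk: assumes "i \<in> {1..<n}" shows "sm n (mk x h i c) = sm n x + c"
proof -
  have "sm n (mk x h i c) = (\<Sum>j\<in>{1..<n}. x j + (if j = i then c else 0))"
    unfolding sm_def mk_def by (rule sum.cong) auto
  also have "\<dots> = sm n x + c" unfolding sm_def sum.distrib using assms by (simp add: sum.delta)
  finally show ?thesis .
qed

lemma wt_mk: assumes "i \<in> {1..<n}" shows "wt n (mk x h i c) = wt n x + int i * c"
proof -
  have "wt n (mk x h i c) = (\<Sum>j\<in>{1..<n}. int j * x j + (if j = i then int i * c else 0))"
    unfolding wt_def mk_def by (rule sum.cong) (auto simp: algebra_simps)
  also have "\<dots> = wt n x + int i * c" unfolding wt_def sum.distrib using assms by (simp add: sum.delta)
  finally show ?thesis .
qed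

lemma psi_mk: assumes "i \<in> {1..<n}" shows "psi n (mk x h i c) = h - sm n x - c"
  using sm_mk[OF assms] unfolding psi_def by (simp add: mk_def)

lemma Zn_mk: "x \<in> Zn n \<Longrightarrow> i < n \<Longrightarrow> 0 < n \<Longrightarrow> mk x h i c \<in> Zn n"
  unfolding Zn_def mk_def by auto

lemma vsub_mk: "i \<noteq> 0 \<Longrightarrow> vsub x (mk x h i c) = pt (x 0 - h) i (- c)"
  unfolding vsub_def mk_def pt_def by (auto simp: fun_eq_iff)

lemma Zn_pt: "i < n \<Longrightarrow> 0 < n \<Longrightarrow> pt p i q \<in> Zn n"
  unfolding Zn_def pt_def by auto

lemma dist_pt: assumes "i \<in> {1..<n}"
  shows "lee_dist n z0 (pt p i q) = \<bar>p\<bar> + \<bar>q\<bar>" "lee_dist n e0 (pt p i q) = \<bar>1 - p\<bar> + \<bar>q\<bar>"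
proof -
  have n1: "n \<ge> 1" using assms by simp
  have s: "\<And>f. (\<Sum>j\<in>{1..<n}. f j * \<bar>pt p i q j\<bar>) = f i * \<bar>q\<bar>"
    using assms unfolding pt_def
    by (simp add: if_distrib[of abs] if_distrib[of "(*) _"] sum.delta cong: if_cong)
  have s1: "(\<Sum>j\<in>{1..<n}. \<bar>pt p i q j\<bar>) = \<bar>q\<bar>" using s[of "\<lambda>_. 1"] by simp
  show "lee_dist n z0 (pt p i q) = \<bar>p\<bar> + \<bar>q\<bar>"
    using lee_dist_split[OF n1] s1 by (simp add: z0_def pt_def)
  have "(\<Sum>j\<in>{1..<n}. \<bar>e0 j - pt p i q j\<bar>) = (\<Sum>j\<in>{1..<n}. \<bar>pt p i q j\<bar>)"
    by (rule sum.cong) (auto simp: e0_def)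
  then show "lee_dist n e0 (pt p i q) = \<bar>1 - p\<bar> + \<bar>q\<bar>"
    using lee_dist_split[OF n1] s1 by (simp add: e0_def pt_def)
qed

lemma DS_pt: assumes "i \<in> {1..<n}" "\<bar>p\<bar> + \<bar>q\<bar> \<le> 1 \<or> \<bar>1 - p\<bar> + \<bar>q\<bar> \<le> 1"
  shows "pt p i q \<in> DS n"
  using assms dist_pt[OF assms(1)] Zn_pt[of i n] unfolding DS_char by auto

lemma Lam_cover:
  assumes n2: "n \<ge> 2" and x: "x \<in> Zn n"
  shows "\<exists>a\<in>Lam n. vsub x a \<in> DS n"
proof -
  define v where "v = wt n x mod int n"
  define r where "r = (x 0 - sm n x + 1) mod 4"
  have v: "0 \<le> v" "v < int n" using n2 unfolding v_def by auto
  have r: "0 \<le> r" "r < 4" unfolding r_def by auto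
  have n0: "0 < n" using n2 by simp
  have one: "1 \<in> {1..<n}" using n2 by simp
  have rm: "4 dvd (x 0 - sm n x + 1) - r" unfolding r_def by (simp add: mod_0_imp_dvd minus_mod_eq_mult_div [symmetric])
  have vm: "int n dvd wt n x - v" unfolding v_def by (simp add: minus_mod_eq_mult_div [symmetric])
  show ?thesis
  proof (cases "v = 0")
    case True
    define a where "a = mk x (x 0 + 1 - r) 1 0"
    have "psi n a = (x 0 - sm n x + 1) - r" unfolding a_def psi_mk[OF one] by simp
    then have "a \<in> Lam n" unfolding Lam_def a_def
      using Zn_mk[OF x _ n0] n2 wt_mk[OF one] vm rm True by simp
    moreover have "vsub x a \<in> DS n" unfolding a_def vsub_mk[of 1 x, OF one_neq_zero]
      by (rule DS_pt[OF one]) (use r in auto)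
    ultimately show ?thesis by blast
  next
    case False
    define i where "i = nat v"
    have i: "i \<in> {1..<n}" using v False unfolding i_def by auto
    then have i0: "i \<noteq> 0" by simp
    show ?thesis
    proof (cases "r \<le> 1")
      case True
      define a where "a = mk x (x 0 - r) i (-1)"
      have "wt n a = wt n x - v" unfolding a_def using wt_mk[OF i, of x "x 0 - r" "-1"] v by (simp add: i_def)
      moreover have "psi n a = (x 0 - sm n x + 1) - r" unfolding a_def psi_mk[OF i] by simp
      ultimately have "a \<in> Lam n" unfolding Lam_def a_def
        using Zn_mk[OF x _ n0] i vm rm by simp
      moreover have "vsub x a \<in> DS n" unfolding a_def vsub_mk[of i x, OF i0]
        by (intro DS_pt[OF i]) (use r True in auto)
      ultimately show ?thesis by blast
    next
      case False
      define k where "k = n - i"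
      have k: "k \<in> {1..<n}" using i unfolding k_def by auto
      then have k0: "k \<noteq> 0" by simp
      define a where "a = mk x (x 0 - (r - 2)) k 1"
      have "wt n a = (wt n x - v) + int n" unfolding a_def using wt_mk[OF k, of x "x 0 - (r - 2)" 1] v i
        by (simp add: k_def i_def of_nat_diff)
      moreover have "psi n a = (x 0 - sm n x + 1) - r" unfolding a_def psi_mk[OF k] by simp
      ultimately have "a \<in> Lam n" unfolding Lam_def a_def
        using Zn_mk[OF x _ n0] k vm rm by simp
      moreover have "vsub x a \<in> DS n" unfolding a_def vsub_mk[of k x, OF k0]
        by (intro DS_pt[OF k]) (use r False in auto)
      ultimately show ?thesis by blast
    qed
  qed
qed



definition dlt :: "nat \<Rightarrow> int" where "dlt = (\<lambda>i. if i = 0 \<or> i = 1 then 1 else 0)"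
definition shf :: "nat \<Rightarrow> nat set \<Rightarrow> (nat \<Rightarrow> int) \<Rightarrow> (nat \<Rightarrow> int)" where
  "shf n A a = (if psi n a div 4 \<in> int ` A then vadd a dlt else a)"
definition LA :: "nat \<Rightarrow> nat set \<Rightarrow> (nat \<Rightarrow> int) set" where
  "LA n A = shf n A ` Lam n"
definition tile :: "nat \<Rightarrow> (nat \<Rightarrow> int) \<Rightarrow> (nat \<Rightarrow> int) set" where
  "tile n c = (\<lambda>v. vadd v c) ` DS n"

lemma dlt_Zn: "n \<ge> 2 \<Longrightarrow> dlt \<in> Zn n" unfolding Zn_def dlt_def by auto

lemma psi_dlt: assumes "n \<ge> 2" shows "psi n dlt = 0"
proof -
  have "sm n dlt = (\<Sum>j\<in>{1..<n}. if j = 1 then 1 else 0)" unfolding sm_def dlt_def by (rule sum.cong) auto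
  also have "\<dots> = 1" using assms by (simp add: sum.delta)
  finally show ?thesis unfolding psi_def dlt_def by simp
qed

lemma psi_z0: "psi n z0 = 0" unfolding psi_def sm_def z0_def by simp
lemma psi_e0: "psi n e0 = 1" unfolding psi_def sm_def e0_def by simp

lemma DS_psi: assumes "n \<ge> 2" "u \<in> DS n" shows "-1 \<le> psi n u \<and> psi n u \<le> 2"
  using assms(2) psi_bound[of n z0 u] psi_bound[of n e0 u] assms(1) psi_z0[of n] psi_e0[of n]
  unfolding DS_char by auto

lemma psi_shf: "n \<ge> 2 \<Longrightarrow> psi n (shf n A a) = psi n a"
  unfolding shf_def using psi_dlt psi_vadd by auto

lemma Zn_shf: "n \<ge> 2 \<Longrightarrow> a \<in> Zn n \<Longrightarrow> shf n A a \<in> Zn n"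
  unfolding shf_def using Zn_vadd dlt_Zn by auto

lemma LA_Zn: "n \<ge> 2 \<Longrightarrow> LA n A \<subseteq> Zn n"
  unfolding LA_def Lam_def using Zn_shf by auto

lemma mem_tile: assumes "c \<in> Zn n" shows "x \<in> tile n c \<longleftrightarrow> x \<in> Zn n \<and> vsub x c \<in> DS n"
proof
  assume "x \<in> tile n c"
  then obtain v where v: "v \<in> DS n" "x = vadd v c" unfolding tile_def by auto
  have "vsub (vadd v c) c = v" unfolding vadd_def vsub_def by simp
  then have "vsub x c = v" using v(2) by simp
  moreover have "x \<in> Zn n" using v DS_sub Zn_vadd[of v n c] assms by auto
  ultimately show "x \<in> Zn n \<and> vsub x c \<in> DS n" using v by simp
next
  assume "x \<in> Zn n \<and> vsub x c \<in> DS n"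
  moreover have "x = vadd (vsub x c) c" unfolding vadd_def vsub_def by (simp add: fun_eq_iff)
  ultimately show "x \<in> tile n c" unfolding tile_def by blast
qed

lemma tile_copy: assumes "c \<in> Zn n" shows "is_copy n (DS n) (tile n c)"
proof -
  have "bij_betw (\<lambda>v. vadd v c) (Zn n) (Zn n)"
    by (rule bij_betw_byWitness[where f'="\<lambda>v. vsub v c"])
       (use assms Zn_vadd Zn_vsub in \<open>auto simp: vadd_def vsub_def\<close>)
  moreover have "\<forall>v\<in>Zn n. \<forall>w\<in>Zn n. lee_dist n (vadd v c) (vadd w c) = lee_dist n v w"
    using lee_dist_vadd by blast
  ultimately show ?thesis unfolding is_copy_def lee_isometry_def tile_def by blast
qed

lemma tile_close: assumes "n \<ge> 2" "c \<in> Zn n" "c' \<in> Zn n" "x \<in> tile n c" "x \<in> tile n c'"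
  shows "lee_dist n c c' \<le> 3"
proof -
  have "vsub x c \<in> DS n" "vsub x c' \<in> DS n" using assms mem_tile by auto
  then have "lee_dist n (vsub x c') (vsub x c) \<le> 3" using DS_diam assms(1) by simp
  moreover have "lee_dist n (vsub x c') (vsub x c) = lee_dist n c c'"
    unfolding lee_dist_def vsub_def by (rule sum.cong) auto
  ultimately show ?thesis by simp
qed

lemma LA_dist: assumes n2: "n \<ge> 2" and c: "c \<in> LA n A" and c': "c' \<in> LA n A" and ne: "c \<noteq> c'"
  shows "lee_dist n c c' \<ge> 4"
proof -
  obtain a a' where a: "a \<in> Lam n" "c = shf n A a" and a': "a' \<in> Lam n" "c' = shf n A a'"
    using c c' unfolding LA_def by auto
  show ?thesis
  proof (cases "psi n a div 4 = psi n a' div 4")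
    case True
    then have "lee_dist n c c' = lee_dist n a a'" using a a' lee_dist_vadd unfolding shf_def by auto
    moreover have "a \<noteq> a'" using a a' ne by auto
    ultimately show ?thesis using Lam_dist[OF n2 a(1) a'(1)] by simp
  next
    case False
    have "4 dvd psi n a" "4 dvd psi n a'" using a a' unfolding Lam_def by auto
    then obtain k k' where kk: "psi n a = 4 * k" "psi n a' = 4 * k'" by (auto simp: dvd_def)
    with False have "k \<noteq> k'" by auto
    then have "\<bar>psi n a - psi n a'\<bar> \<ge> 4" unfolding kk by presburger
    moreover have "psi n c = psi n a" "psi n c' = psi n a'" using a a' psi_shf[OF n2] by auto
    moreover have "\<bar>psi n c - psi n c'\<bar> \<le> lee_dist n c c'" using psi_bound[of n c c'] n2 by simp
    ultimately show ?thesis by linarith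
  qed
qed

lemma LA_cover: assumes n2: "n \<ge> 2" and x: "x \<in> Zn n" shows "\<exists>c\<in>LA n A. x \<in> tile n c"
proof -
  define j where "j = (psi n x + 1) div 4"
  have jb: "4 * j - 1 \<le> psi n x" "psi n x \<le> 4 * j + 2" unfolding j_def by auto
  define x' where "x' = (if j \<in> int ` A then vsub x dlt else x)"
  have x'Z: "x' \<in> Zn n" unfolding x'_def using x dlt_Zn[OF n2] Zn_vsub by auto
  have px': "psi n x' = psi n x" unfolding x'_def using psi_vsub psi_dlt[OF n2] by auto
  obtain a where a: "a \<in> Lam n" "vsub x' a \<in> DS n" using Lam_cover[OF n2 x'Z] by blast
  have "-1 \<le> psi n (vsub x' a) \<and> psi n (vsub x' a) \<le> 2" using DS_psi[OF n2 a(2)] .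
  then have pa: "psi n x - 2 \<le> psi n a" "psi n a \<le> psi n x + 1" using psi_vsub[of n x' a] px' by auto
  obtain k where k: "psi n a = 4 * k" using a(1) unfolding Lam_def by (auto simp: dvd_def)
  have "k = j" using pa jb k by linarith
  then have ja: "psi n a div 4 = j" using k by simp
  have "vsub x (shf n A a) = vsub x' a"
    unfolding shf_def x'_def ja by (auto simp: vsub_def vadd_def fun_eq_iff)
  then have "x \<in> tile n (shf n A a)" using mem_tile[of "shf n A a" n x] Zn_shf[OF n2] a x
    unfolding Lam_def by auto
  moreover have "shf n A a \<in> LA n A" using a unfolding LA_def by auto
  ultimately show ?thesis by blast
qed

lemma self_tile: assumes "c \<in> Zn n" shows "c \<in> tile n c"
proof -
  have "vsub c c = z0" unfolding vsub_def z0_def by simp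
  moreover have "z0 \<in> DS n" unfolding DS_char by (simp add: lee_dist_def z0_def Zn_def)
  ultimately show ?thesis using mem_tile[OF assms] assms by simp
qed

lemma LA_code: assumes n2: "n \<ge> 2" shows "perfect_lee_code_d4 n (LA n A)"
proof -
  have LZ: "LA n A \<subseteq> Zn n" using LA_Zn[OF n2] .
  have uniq: "\<And>c c' x. c \<in> LA n A \<Longrightarrow> c' \<in> LA n A \<Longrightarrow> x \<in> tile n c \<Longrightarrow> x \<in> tile n c' \<Longrightarrow> c = c'"
  proof (rule ccontr)
    fix c c' x assume h: "c \<in> LA n A" "c' \<in> LA n A" "x \<in> tile n c" "x \<in> tile n c'" "c \<noteq> c'"
    then have "lee_dist n c c' \<ge> 4" using LA_dist[OF n2] by blast
    moreover have "lee_dist n c c' \<le> 3" using tile_close[OF n2] h LZ by blast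
    ultimately show False by simp
  qed
  define T where "T = tile n ` LA n A"
  have "DS_tiling n T"
    unfolding DS_tiling_def
  proof (intro conjI)
    show "\<forall>S\<in>T. is_copy n (DS n) S"
    proof
      fix S assume "S \<in> T"
      then obtain c where "c \<in> LA n A" "S = tile n c" unfolding T_def by auto
      then show "is_copy n (DS n) S" using tile_copy[of c n] LZ by auto
    qed
    show "\<forall>S\<in>T. \<forall>S'\<in>T. S \<noteq> S' \<longrightarrow> S \<inter> S' = {}"
    proof (intro ballI impI)
      fix S S' assume "S \<in> T" "S' \<in> T" "S \<noteq> S'"
      then obtain c c' where "c \<in> LA n A" "c' \<in> LA n A" "S = tile n c" "S' = tile n c'"
        unfolding T_def by auto
      then show "S \<inter> S' = {}" using uniq \<open>S \<noteq> S'\<close> by blast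
    qed
    show "\<Union>T = Zn n"
    proof
      show "\<Union>T \<subseteq> Zn n"
      proof
        fix x assume "x \<in> \<Union>T"
        then obtain c where "c \<in> LA n A" "x \<in> tile n c" unfolding T_def by auto
        then show "x \<in> Zn n" using mem_tile[of c n x] LZ by auto
      qed
      show "Zn n \<subseteq> \<Union>T"
      proof
        fix x assume "x \<in> Zn n"
        then obtain c where "c \<in> LA n A" "x \<in> tile n c" using LA_cover[OF n2] by blast
        then show "x \<in> \<Union>T" unfolding T_def by auto
      qed
    qed
  qed
  moreover have "\<forall>S\<in>T. \<exists>!c. c \<in> LA n A \<and> c \<in> S"
  proof
    fix S assume "S \<in> T"
    then obtain c where c: "c \<in> LA n A" "S = tile n c" unfolding T_def by auto
    show "\<exists>!c. c \<in> LA n A \<and> c \<in> S"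
    proof (rule ex1I[of _ c])
      show "c \<in> LA n A \<and> c \<in> S" using c self_tile LZ by blast
      fix c' assume "c' \<in> LA n A \<and> c' \<in> S"
      then show "c' = c" using uniq[of c' c c'] c self_tile LZ by blast
    qed
  qed
  moreover have "\<forall>S\<in>T. \<forall>S'\<in>T. \<forall>c\<in>LA n A. S \<noteq> S' \<and> c \<in> S \<longrightarrow> c \<notin> S'"
  proof (intro ballI impI)
    fix S S' c assume "S \<in> T" "S' \<in> T" "c \<in> LA n A" "S \<noteq> S' \<and> c \<in> S"
    then obtain d d' where "d \<in> LA n A" "d' \<in> LA n A" "S = tile n d" "S' = tile n d'"
      unfolding T_def by auto
    then show "c \<notin> S'" using uniq \<open>S \<noteq> S' \<and> c \<in> S\<close> by blast
  qed
  moreover have "\<forall>c\<in>LA n A. \<forall>c'\<in>LA n A. c \<noteq> c' \<longrightarrow> lee_dist n c c' \<ge> 4"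
    using LA_dist[OF n2] by blast
  ultimately show ?thesis unfolding perfect_lee_code_d4_def using LZ by blast
qed



definition pj :: "nat \<Rightarrow> nat \<Rightarrow> int" where "pj j = (\<lambda>i. if i = 0 then 4 * int j else 0)"

lemma wt_dlt: assumes "n \<ge> 2" shows "wt n dlt = 1"
proof -
  have "wt n dlt = (\<Sum>i\<in>{1..<n}. if i = 1 then 1 else 0)" unfolding wt_def dlt_def by (rule sum.cong) auto
  also have "\<dots> = 1" using assms by (simp add: sum.delta)
  finally show ?thesis .
qed

lemma pj_Lam: "n \<ge> 2 \<Longrightarrow> pj j \<in> Lam n"
  unfolding Lam_def Zn_def wt_def psi_def sm_def pj_def by auto

lemma psi_pj: "psi n (pj j) = 4 * int j"
  unfolding psi_def sm_def pj_def by simp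

lemma pj_LA: assumes n2: "n \<ge> 2" shows "pj j \<in> LA n A \<longleftrightarrow> j \<notin> A"
proof
  assume "j \<notin> A"
  then have "shf n A (pj j) = pj j" unfolding shf_def psi_pj by auto
  then show "pj j \<in> LA n A" unfolding LA_def using pj_Lam[OF n2] by (metis image_eqI)
next
  assume "pj j \<in> LA n A"
  then obtain a where a: "a \<in> Lam n" "pj j = shf n A a" unfolding LA_def by auto
  show "j \<notin> A"
  proof
    assume jA: "j \<in> A"
    have "psi n a = 4 * int j" using psi_shf[OF n2, of A a] a(2) psi_pj[of n j] by simp
    then have "psi n a div 4 \<in> int ` A" using jA by simp
    then have "pj j = vadd a dlt" using a unfolding shf_def by simp
    then have "a = vsub (pj j) dlt" unfolding vadd_def vsub_def by (auto simp: fun_eq_iff)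
    then have "wt n a = wt n (pj j) - 1" using wt_vsub wt_dlt[OF n2] by simp
    moreover have "wt n (pj j) = 0" unfolding wt_def pj_def by simp
    ultimately have "int n dvd -1" using a unfolding Lam_def by simp
    then show False using n2 by simp
  qed
qed

lemma LA_inj: assumes "n \<ge> 2" shows "inj (LA n)"
proof
  fix A B assume "LA n A = LA n B"
  then have "\<forall>j. j \<in> A \<longleftrightarrow> j \<in> B" using pj_LA[OF assms] by blast
  then show "A = B" by auto
qed

definition ek :: "nat \<Rightarrow> nat \<Rightarrow> int" where "ek m = (\<lambda>j. if j = m then 1 else 0)"
definition trunc :: "nat \<Rightarrow> (nat \<Rightarrow> int) \<Rightarrow> nat \<Rightarrow> int" where
  "trunc m v = (\<lambda>j. if j < m then v j else 0)"
definition Gv :: "nat \<Rightarrow> (nat \<Rightarrow> int) list \<Rightarrow> (nat \<Rightarrow> int) \<Rightarrow> nat \<Rightarrow> int" where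
  "Gv n ts v = (\<lambda>k. \<Sum>i<n. v i * (ts ! i) k)"

lemma lin_repr:
  assumes f: "linear_lee_isometry n f" and v: "v \<in> Zn n"
  shows "m \<le> n \<Longrightarrow> f (trunc m v) = (\<lambda>k. \<Sum>i<m. v i * f (ek i) k)"
proof (induction m)
  case 0
  have z: "z0 \<in> Zn n" unfolding Zn_def z0_def by simp
  have hom: "\<forall>k. \<forall>v\<in>Zn n. f (\<lambda>i. k * v i) = (\<lambda>i. k * f v i)"
    using f unfolding linear_lee_isometry_def by blast
  have "f (\<lambda>i. 0 * z0 i) = (\<lambda>i. 0 * f z0 i)" using hom[rule_format, OF z, of 0] by simp
  then show ?case unfolding trunc_def z0_def by simp
next
  case (Suc m)
  have tZ: "trunc m v \<in> Zn n" using v Suc.prems unfolding Zn_def trunc_def by auto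
  have eZ: "ek m \<in> Zn n" using Suc.prems unfolding Zn_def ek_def by auto
  have uZ: "(\<lambda>i. v m * ek m i) \<in> Zn n" using eZ unfolding Zn_def by auto
  have split: "trunc (Suc m) v = (\<lambda>i. trunc m v i + v m * ek m i)"
    unfolding trunc_def ek_def by (auto simp: fun_eq_iff less_Suc_eq)
  have add: "\<forall>v\<in>Zn n. \<forall>w\<in>Zn n. f (\<lambda>i. v i + w i) = (\<lambda>i. f v i + f w i)"
    and hom: "\<forall>k. \<forall>v\<in>Zn n. f (\<lambda>i. k * v i) = (\<lambda>i. k * f v i)"
    using f unfolding linear_lee_isometry_def by blast+
  have "f (trunc (Suc m) v) = (\<lambda>i. f (trunc m v) i + f (\<lambda>i. v m * ek m i) i)"
    unfolding split using add[rule_format, OF tZ uZ] by simp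
  also have "f (\<lambda>i. v m * ek m i) = (\<lambda>i. v m * f (ek m) i)"
    using hom[rule_format, OF eZ] by simp
  finally show ?case using Suc by (simp add: fun_eq_iff)
qed

lemma lin_Gv:
  assumes f: "linear_lee_isometry n f" and v: "v \<in> Zn n"
  shows "f v = Gv n (map (\<lambda>i. f (ek i)) [0..<n]) v"
proof -
  have "trunc n v = v" using v unfolding trunc_def Zn_def by (auto simp: fun_eq_iff)
  then have "f v = (\<lambda>k. \<Sum>i<n. v i * f (ek i) k)" using lin_repr[OF f v, of n] by simp
  then show ?thesis unfolding Gv_def by simp
qed

lemma countable_Zn: "countable (Zn n)"
proof (rule countable_image_inj_on[where f="\<lambda>v. map v [0..<n]"])
  show "countable ((\<lambda>v. map v [0..<n]) ` Zn n)" by simp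
  show "inj_on (\<lambda>v. map v [0..<n]) (Zn n)"
  proof
    fix u v assume uv: "u \<in> Zn n" "v \<in> Zn n" "map u [0..<n] = map v [0..<n]"
    show "u = v"
    proof
      fix i show "u i = v i"
        using uv unfolding Zn_def by (cases "i < n") (auto simp: map_eq_conv)
    qed
  qed
qed

lemma iso_class_countable:
  assumes "L \<subseteq> Zn n"
  shows "countable {L'. \<exists>f. linear_lee_isometry n f \<and> f ` L = L'}"
proof -
  have "{L'. \<exists>f. linear_lee_isometry n f \<and> f ` L = L'} \<subseteq> (\<lambda>ts. Gv n ts ` L) ` lists (Zn n)"
  proof
    fix L' assume "L' \<in> {L'. \<exists>f. linear_lee_isometry n f \<and> f ` L = L'}"
    then obtain f where f: "linear_lee_isometry n f" "f ` L = L'" by auto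
    define ts where "ts = map (\<lambda>i. f (ek i)) [0..<n]"
    have "ts \<in> lists (Zn n)"
    proof -
      have "\<And>i. i < n \<Longrightarrow> ek i \<in> Zn n" unfolding Zn_def ek_def by auto
      moreover have "f ` Zn n \<subseteq> Zn n" using f(1) unfolding linear_lee_isometry_def lee_isometry_def
        by (simp add: bij_betw_def)
      ultimately show ?thesis unfolding ts_def by (auto simp: image_subset_iff)
    qed
    moreover have "L' = Gv n ts ` L" using f lin_Gv[OF f(1)] assms unfolding ts_def
      by (auto intro!: image_cong)
    ultimately show "L' \<in> (\<lambda>ts. Gv n ts ` L) ` lists (Zn n)" by blast
  qed
  moreover have "countable ((\<lambda>ts. Gv n ts ` L) ` lists (Zn n))"
    using countable_Zn by simp
  ultimately show ?thesis using countable_subset by blast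
qed



lemma id_lin: "linear_lee_isometry n (\<lambda>x. x)"
  unfolding linear_lee_isometry_def lee_isometry_def by (simp add: bij_betw_id[unfolded id_def])

lemma codes_Zn: "L \<in> codes_d4 n \<Longrightarrow> L \<subseteq> Zn n"
  unfolding codes_d4_def perfect_lee_code_d4_def by auto

lemma refl_iso: "L \<in> codes_d4 n \<Longrightarrow> L \<in> code_iso n `` {L}"
  unfolding code_iso_def using id_lin[of n] by auto

theorem theorem8:
  fixes n :: nat
  assumes "n \<ge> 2"
  shows "\<exists>g. bij_betw g (codes_d4 n // code_iso n) (UNIV :: real set)"
proof -
  define Q where "Q = codes_d4 n // code_iso n"
  have upper: "Q \<lesssim> (UNIV :: nat set set)"
  proof -
    define rep where "rep q = (SOME L. L \<in> codes_d4 n \<and> q = code_iso n `` {L})" for q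
    have rep: "rep q \<in> codes_d4 n \<and> q = code_iso n `` {rep q}" if "q \<in> Q" for q
    proof -
      from that obtain L where "L \<in> codes_d4 n" "q = code_iso n `` {L}"
        unfolding Q_def by (auto elim!: quotientE)
      then have "\<exists>L. L \<in> codes_d4 n \<and> q = code_iso n `` {L}" by blast
      then show ?thesis unfolding rep_def by (rule someI_ex)
    qed
    define h where "h q = to_nat_on (Zn n) ` rep q" for q
    have "inj_on h Q"
    proof
      fix q q' assume qq: "q \<in> Q" "q' \<in> Q" "h q = h q'"
      have "rep q = rep q'"
        using qq rep codes_Zn inj_on_image_eq_iff[OF inj_on_to_nat_on[OF countable_Zn]]
        unfolding h_def by metis
      then show "q = q'" using rep qq by metis
    qed
    then show ?thesis unfolding lepoll_def by blast
  qed
  have lower: "(UNIV :: nat set set) \<lesssim> Q"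
  proof -
    define F where "F A = code_iso n `` {LA n A}" for A
    have FQ: "F A \<in> Q" for A
      unfolding F_def Q_def using LA_code[OF assms] by (intro quotientI) (simp add: codes_d4_def)
    have fib: "countable {A. F A = q}" for q
    proof (cases "{A. F A = q} = {}")
      case True then show ?thesis by simp
    next
      case False
      then obtain A0 where A0: "F A0 = q" by auto
      have "LA n ` {A. F A = q} \<subseteq> {L'. \<exists>f. linear_lee_isometry n f \<and> f ` LA n A0 = L'}"
      proof
        fix L assume "L \<in> LA n ` {A. F A = q}"
        then obtain A where A: "F A = q" "L = LA n A" by auto
        have "LA n A \<in> codes_d4 n" using LA_code[OF assms] by (simp add: codes_d4_def)
        then have "LA n A \<in> F A" unfolding F_def by (rule refl_iso)
        then have "LA n A \<in> F A0" using A A0 by simp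
        then show "L \<in> {L'. \<exists>f. linear_lee_isometry n f \<and> f ` LA n A0 = L'}"
          unfolding F_def code_iso_def using A by auto
      qed
      moreover have "countable {L'. \<exists>f. linear_lee_isometry n f \<and> f ` LA n A0 = L'}"
        by (rule iso_class_countable) (rule LA_Zn[OF assms])
      ultimately have "countable (LA n ` {A. F A = q})" using countable_subset by blast
      then show ?thesis by (rule countable_image_inj_on) (use LA_inj[OF assms] in \<open>auto intro: inj_on_subset\<close>)
    qed
    define B where "B = range F"
    have U: "(UNIV :: nat set set) = (\<Union>q\<in>B. {A. F A = q})" unfolding B_def by auto
    have unc: "uncountable (UNIV :: nat set set)"
      using nat_sets_eqpoll_reals uncountable_UNIV_real countable_eqpoll eqpoll_sym by blast
    have infB: "infinite B"
    proof
      assume "finite B"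
      then have "countable (\<Union>q\<in>B. {A. F A = q})" using fib by (intro countable_UN) (auto intro: countable_finite)
      with U unc show False by simp
    qed
    have fibs: "\<forall>q\<in>B. (card_of {A. F A = q}, card_of B) \<in> ordLeq"
    proof
      fix q assume "q \<in> B"
      have "{A. F A = q} \<lesssim> (UNIV :: nat set)" using fib[of q] unfolding countable_def lepoll_def by blast
      also have "(UNIV :: nat set) \<lesssim> B" using infB infinite_le_lepoll by blast
      finally show "(card_of {A. F A = q}, card_of B) \<in> ordLeq" unfolding lepoll_def card_of_ordLeq .
    qed
    have BB: "(card_of B, card_of B) \<in> ordLeq" by (rule card_of_mono1) simp
    have "(card_of (\<Union>q\<in>B. {A. F A = q}), card_of B) \<in> ordLeq"
      by (rule card_of_UNION_ordLeq_infinite[OF infB BB fibs])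
    then have "(UNIV :: nat set set) \<lesssim> B" unfolding U lepoll_def card_of_ordLeq .
    also have "B \<lesssim> Q" using FQ unfolding B_def by (intro subset_imp_lepoll) auto
    finally show ?thesis .
  qed
  have "Q \<approx> (UNIV :: nat set set)" using lepoll_antisym[OF upper lower] .
  also have "\<dots> \<approx> (UNIV :: real set)" by (rule nat_sets_eqpoll_reals)
  finally show ?thesis unfolding Q_def eqpoll_def .
qed

end
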